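(* Let $\gamma,h>0$, $\eta=e^{-\gamma h}$, $n\ge1$, and for $k\in\{0,\dots,n\}$ define \[ \alpha_k=(1-\eta^2)(1-\eta^{2n})k-2\eta(1+\eta^{n-k})(1-\eta^k)(1-\eta^n), \] \[ \beta_k=(1-\eta^2)\Bigl(\eta^{-k}(1-\eta^k)^2n+(1-\eta^n)^2k\Bigr)-2\eta^{1-k}(1-\eta^k)(1-\eta^n)(2-\eta^k-\eta^n). \] Then both $(\alpha_k)_{0\le k\le n}$ and $(\beta_k)_{0\le k\le n}$ are nondecreasing sequences. *)

theory Defs
  imports Complex_Main
begin

definition alpha_seq :: "real \<Rightarrow> nat \<Rightarrow> nat \<Rightarrow> real" where
  "alpha_seq \<eta> n k =
     (1 - \<eta>^2) * (1 - \<eta>^(2*n)) * real k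
     - 2 * \<eta> * (1 + \<eta>^(n - k)) * (1 - \<eta>^k) * (1 - \<eta>^n)"

definition beta_seq :: "real \<Rightarrow> nat \<Rightarrow> nat \<Rightarrow> real" where
  "beta_seq \<eta> n k =
     (1 - \<eta>^2) * ((\<eta> powi (- int k)) * (1 - \<eta>^k)^2 * real n + (1 - \<eta>^n)^2 * real k)
     - 2 * (\<eta> powi (1 - int k)) * (1 - \<eta>^k) * (1 - \<eta>^n) * (2 - \<eta>^k - \<eta>^n)"

end

theory Submission
  imports Defs
begin

lemma alpha_step:
  fixes e :: real assumes e: "0 < e" "e < 1" and kn: "k < n"
  shows "alpha_seq e n k \<le> alpha_seq e n (Suc k)"
proof -
  obtain m where n: "n = k + 1 + m" using kn by (metis add.commute add_Suc less_iff_Suc_add plus_1_eq_Suc)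
  define a where "a = e^k"
  define b where "b = e^m"
  have a: "0 < a" "a \<le> 1" using e by (auto simp: a_def power_le_one)
  have b: "0 < b" "b \<le> 1" using e by (auto simp: b_def power_le_one)
  have p: "e^n = e*a*b" by (simp add: n a_def b_def power_add)
  have p2: "e^(2*n) = (e*a*b)^2" by (metis p power_mult mult.commute)
  have nk: "n - k = Suc m" "n - Suc k = m" using n by auto
  have eq: "alpha_seq e n (Suc k) - alpha_seq e n k
      = (1 - e*a*b) * (1 - e) * ((1 + e) * (1 + e*a*b) - 2*e*(a + b))"
  proof -
    have q: "e^k = a" "e^Suc k = e*a" "e^Suc m = e*b" "e^m = b" by (simp_all add: a_def b_def)
    show ?thesis unfolding alpha_seq_def nk p2 p q by (simp add: power2_eq_square algebra_simps)
  qed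
  have h1: "1 + e*e*a*b \<ge> e*a + e*b"
  proof -
    have "(1 - e*a)*(1-e*b) \<ge> 0" using a b e by (intro mult_nonneg_nonneg) (auto simp: mult_le_one)
    then show ?thesis by (simp add: algebra_simps)
  qed
  have h2: "e*(1 + a*b) \<ge> e*a + e*b"
  proof -
    have "e*((1 - a)*(1-b)) \<ge> 0" using a b e by (intro mult_nonneg_nonneg) auto
    then show ?thesis by (simp add: algebra_simps)
  qed
  have "(1 + e) * (1 + e*a*b) - 2*e*(a + b) \<ge> 0"
    using h1 h2 by (simp add: algebra_simps)
  moreover have "1 - e*a*b \<ge> 0" using a b e by (simp add: mult_le_one)
  ultimately have "(1 - e*a*b) * (1 - e) * ((1 + e) * (1 + e*a*b) - 2*e*(a + b)) \<ge> 0"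
    using e by simp
  then show ?thesis using eq by simp
qed

lemma beta_step:
  fixes e :: real assumes e: "0 < e" "e < 1" and kn: "k < n"
    and hN: "(1-e^2)*(1+e^n)*real n \<ge> 4*e*(1-e^n)"
  shows "beta_seq e n k \<le> beta_seq e n (Suc k)"
proof -
  define a where "a = e^k"
  define p where "p = e^n"
  define N where "N = real n"
  define y where "y = 1 - p"
  have a: "0 < a" "a \<le> 1" using e by (auto simp: a_def power_le_one)
  have p: "0 < p" "p \<le> 1" using e by (auto simp: p_def power_le_one)
  have eap: "e*a \<ge> p"
  proof -
    have "e^n \<le> e^(Suc k)" using e kn by (intro power_decreasing) auto
    thus ?thesis by (simp add: p_def a_def)
  qed
  have q: "e powi (- int k) = 1/a" "e powi (- int (Suc k)) = 1/(e*a)"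
          "e powi (1 - int k) = e/a" "e powi (1 - int (Suc k)) = 1/a"
          "e^Suc k = e*a" "e^k = a" "e^n = p"
    using e by (simp_all add: a_def p_def power_int_diff power_int_minus field_simps)
  define Q where "Q = 2*(e*a - p)*(1-a) + a*(1-e)*(1-p)"
  define R where "R = e*y^2*Q + (1-e*a^2)*((1-e^2)*(1+p)*N - 4*e*y)"
  have eq: "(beta_seq e n (Suc k) - beta_seq e n k) * (a*e*(1+p)) = (1-e)*R"
    unfolding beta_seq_def q R_def Q_def N_def[symmetric] y_def using e a p
    by (simp add: field_simps power2_eq_square)
  have Q: "Q \<ge> 0" unfolding Q_def using eap a e p by (intro add_nonneg_nonneg mult_nonneg_nonneg) auto
  have "e*a^2 \<le> 1" using e a by (simp add: power2_eq_square mult_le_one)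
  moreover have "(1-e^2)*(1+p)*N - 4*e*y \<ge> 0" using hN by (simp add: p_def N_def y_def)
  ultimately have "R \<ge> 0" unfolding R_def using Q e by (intro add_nonneg_nonneg mult_nonneg_nonneg) auto
  hence "(beta_seq e n (Suc k) - beta_seq e n k) * (a*e*(1+p)) \<ge> 0" using eq e by simp
  moreover have "a*e*(1+p) > 0" using a e p by simp
  ultimately show ?thesis by (simp add: zero_le_mult_iff)
qed

lemma mono_on_steps:
  fixes f :: "nat \<Rightarrow> real"
  assumes "\<And>k. k < n \<Longrightarrow> f k \<le> f (Suc k)"
  shows "mono_on {0..n} f"
proof (rule mono_onI)
  fix r s assume rs: "r \<in> {0..n}" "s \<in> {0..n}" "r \<le> s"
  have "\<forall>d. r + d \<le> n \<longrightarrow> f r \<le> f (r + d)"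
  proof
    fix d show "r + d \<le> n \<longrightarrow> f r \<le> f (r + d)"
    proof (induction d)
      case 0 then show ?case by simp
    next
      case (Suc d) then show ?case using assms[of "r+d"] by auto
    qed
  qed
  then have "f r \<le> f (r + (s - r))" using rs by (metis atLeastAtMost_iff le_add_diff_inverse)
  then show "f r \<le> f s" using rs by simp
qed

theorem mainTheorem18:
  fixes \<gamma> h :: real and n :: nat
  assumes "\<gamma> > 0" and "h > 0" and "n \<ge> 1"
  defines "\<eta> \<equiv> exp (- \<gamma> * h)"
  shows "mono_on {0..n} (alpha_seq \<eta> n) \<and> mono_on {0..n} (beta_seq \<eta> n)"
proof -
  have e: "0 < \<eta>" "\<eta> < 1" using assms by (auto simp: \<eta>_def)
  have am: "mono_on {0..n} (alpha_seq \<eta> n)"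
    by (rule mono_on_steps) (rule alpha_step[OF e])
  have "alpha_seq \<eta> n 0 \<le> alpha_seq \<eta> n n" using am by (rule mono_onD) auto
  hence h0: "0 \<le> (1 - \<eta>^n) * ((1-\<eta>^2)*(1+\<eta>^n)*real n - 4*\<eta>*(1-\<eta>^n))"
    by (simp add: alpha_seq_def power_mult power2_eq_square algebra_simps)
  have "\<eta>^n < 1" using e assms by (simp add: power_less_one_iff)
  hence "(1-\<eta>^2)*(1+\<eta>^n)*real n - 4*\<eta>*(1-\<eta>^n) \<ge> 0" using h0 by (simp add: zero_le_mult_iff)
  hence hN: "(1-\<eta>^2)*(1+\<eta>^n)*real n \<ge> 4*\<eta>*(1-\<eta>^n)" by simp
  have bm: "mono_on {0..n} (beta_seq \<eta> n)"
    by (rule mono_on_steps) (rule beta_step[OF e _ hN])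
  show ?thesis using am bm by simp
qed

end
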